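(* Let $m,n$ be positive integers with $m\ge n$. Then there exists a common knowledge distinguishing debate game $B=(A,S,P,C_w,C_l)$ such that $|C_w(s)|\ge m$ and $|C_l(s)|\le n$ for all $s\in S$, but $e^{\mathrm{CKDDG}}_B(M)\ge\frac{2n-m}{2m}$ for every policy $M$.
   Context: Let $\delta$ be a special default action. A CKDDG is a tuple $(A,S,P,C_w,C_l)$ with $A$ finite, $\delta\notin A$, $S$ finite, $P$ a probability mass function on $S$, and $C_w,C_l:S\to\mathcal P(A)$. A policy is $M:\{1,2\}\times(A\cup\{\delta\})^2\to[0,1]$ with $M(1,a_1,a_2)+M(2,a_1,a_2)=1$. For $j\in\{1,2\}$ and $s\in S$, $w^i_M((j,s))$ is the value to agent $i$ of the two-player zero-sum game with payoff matrix $M(i,\cdot,\cdot)$ in which agent $j$ chooses from $C_w(s)\cup\{\delta\}$ and the other agent chooses from $C_l(s)\cup\{\delta\}$. The error is $e^{\mathrm{CKDDG}}_B(M)=\mathbb E_{s\sim P}\left[\frac{w^1_M((2,s))+w^2_M((1,s))}{2}\right]$. *)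

theory Defs
  imports Complex_Main
begin

text \<open>Actions are of type 'a option; None plays the role of the default action delta,
  so delta is automatically not an element of A (encoded as Some ` A).\<close>

type_synonym 'a policy = "nat \<Rightarrow> 'a option \<Rightarrow> 'a option \<Rightarrow> real"

definition ext_actions :: "'a set \<Rightarrow> 'a option set" where
  "ext_actions C = insert None (Some ` C)"

definition is_ckddg :: "'a set \<Rightarrow> 's set \<Rightarrow> ('s \<Rightarrow> real) \<Rightarrow> ('s \<Rightarrow> 'a set) \<Rightarrow> ('s \<Rightarrow> 'a set) \<Rightarrow> bool" where
  "is_ckddg A S P Cw Cl \<longleftrightarrow> finite A \<and> finite S \<and> S \<noteq> {} \<and>
     (\<forall>s\<in>S. 0 \<le> P s) \<and> (\<Sum>s\<in>S. P s) = 1 \<and>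
     (\<forall>s\<in>S. Cw s \<subseteq> A \<and> Cl s \<subseteq> A)"

definition is_policy :: "'a set \<Rightarrow> 'a policy \<Rightarrow> bool" where
  "is_policy A M \<longleftrightarrow> (\<forall>a1\<in>ext_actions A. \<forall>a2\<in>ext_actions A.
     (\<forall>i\<in>{1,2}. 0 \<le> M i a1 a2 \<and> M i a1 a2 \<le> 1) \<and> M 1 a1 a2 + M 2 a1 a2 = 1)"

definition mixed :: "'b set \<Rightarrow> ('b \<Rightarrow> real) set" where
  "mixed X = {p. (\<forall>x. 0 \<le> p x) \<and> (\<forall>x. x \<notin> X \<longrightarrow> p x = 0) \<and> sum p X = 1}"

definition exp_payoff :: "'a policy \<Rightarrow> nat \<Rightarrow> 'a option set \<Rightarrow> 'a option set
     \<Rightarrow> ('a option \<Rightarrow> real) \<Rightarrow> ('a option \<Rightarrow> real) \<Rightarrow> real" where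
  "exp_payoff M i X1 X2 p1 p2 = (\<Sum>a1\<in>X1. \<Sum>a2\<in>X2. p1 a1 * p2 a2 * M i a1 a2)"

definition game_value :: "'a policy \<Rightarrow> nat \<Rightarrow> 'a option set \<Rightarrow> 'a option set \<Rightarrow> real" where
  "game_value M i X1 X2 =
     (if i = 1 then (SUP p1\<in>mixed X1. INF p2\<in>mixed X2. exp_payoff M 1 X1 X2 p1 p2)
      else (SUP p2\<in>mixed X2. INF p1\<in>mixed X1. exp_payoff M 2 X1 X2 p1 p2))"

text \<open>w^i_M((j,s)): agent j chooses from Cw s \<union> {delta}, the other from Cl s \<union> {delta}.\<close>
definition wval :: "('s \<Rightarrow> 'a set) \<Rightarrow> ('s \<Rightarrow> 'a set) \<Rightarrow> 'a policy \<Rightarrow> nat \<Rightarrow> nat \<Rightarrow> 's \<Rightarrow> real" where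
  "wval Cw Cl M i j s =
     (if j = 1 then game_value M i (ext_actions (Cw s)) (ext_actions (Cl s))
      else game_value M i (ext_actions (Cl s)) (ext_actions (Cw s)))"

definition ckddg_error :: "'s set \<Rightarrow> ('s \<Rightarrow> real) \<Rightarrow> ('s \<Rightarrow> 'a set) \<Rightarrow> ('s \<Rightarrow> 'a set)
     \<Rightarrow> 'a policy \<Rightarrow> real" where
  "ckddg_error S P Cw Cl M =
     (\<Sum>s\<in>S. P s * ((wval Cw Cl M 1 2 s + wval Cw Cl M 2 1 s) / 2))"

end

theory Submission imports Defs begin

definition pcone :: "('c \<Rightarrow> real) set \<Rightarrow> ('c \<Rightarrow> real) set" where
  "pcone V = {x. \<exists>c. (\<forall>v\<in>V. 0 \<le> c v) \<and> x = (\<lambda>j. \<Sum>v\<in>V. c v * v j)}"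

lemma pcone_base: assumes "finite V" "v \<in> V" shows "v \<in> pcone V"
proof -
  have "v = (\<lambda>j. \<Sum>w\<in>V. (if w = v then 1 else 0) * w j)"
  proof
    fix j
    have "(\<Sum>w\<in>V. (if w = v then 1 else 0) * w j) = (\<Sum>w\<in>V. if w = v then v j else 0)"
      by (rule sum.cong) auto
    then show "v j = (\<Sum>w\<in>V. (if w = v then 1 else 0) * w j)" using assms by simp
  qed
  then show ?thesis unfolding pcone_def by (intro CollectI exI[of _ "\<lambda>w. if w = v then 1 else 0"]) auto
qed

lemma pcone_zero: "(\<lambda>j. 0) \<in> pcone V"
  unfolding pcone_def by (intro CollectI exI[of _ "\<lambda>w. 0"]) auto

lemma pcone_add: assumes "x \<in> pcone V" "y \<in> pcone V" shows "(\<lambda>j. x j + y j) \<in> pcone V"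
proof -
  obtain c1 where c1: "\<forall>v\<in>V. 0 \<le> c1 v" "x = (\<lambda>j. \<Sum>v\<in>V. c1 v * v j)" using assms(1) unfolding pcone_def by auto
  obtain c2 where c2: "\<forall>v\<in>V. 0 \<le> c2 v" "y = (\<lambda>j. \<Sum>v\<in>V. c2 v * v j)" using assms(2) unfolding pcone_def by auto
  show ?thesis unfolding pcone_def
    by (intro CollectI exI[of _ "\<lambda>v. c1 v + c2 v"]) (auto simp: c1 c2 distrib_right sum.distrib)
qed

lemma pcone_scale: assumes "x \<in> pcone V" "0 \<le> t" shows "(\<lambda>j. t * x j) \<in> pcone V"
proof -
  obtain c1 where c1: "\<forall>v\<in>V. 0 \<le> c1 v" "x = (\<lambda>j. \<Sum>v\<in>V. c1 v * v j)" using assms(1) unfolding pcone_def by auto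
  show ?thesis unfolding pcone_def
    by (intro CollectI exI[of _ "\<lambda>v. t * c1 v"]) (auto simp: c1 assms(2) sum_distrib_left mult.assoc)
qed

lemma pcone_sum: assumes "finite W" "\<forall>w\<in>W. w \<in> pcone V" "\<forall>w\<in>W. 0 \<le> c w"
  shows "(\<lambda>j. \<Sum>w\<in>W. c w * w j) \<in> pcone V"
  using assms
proof (induction W rule: finite_induct)
  case empty then show ?case using pcone_zero by simp
next
  case (insert w W)
  have "(\<lambda>j. c w * w j + (\<Sum>w\<in>W. c w * w j)) \<in> pcone V"
    using pcone_add[OF pcone_scale[of w V "c w"] insert.IH] insert.prems by auto
  then show ?case using insert.hyps by simp
qed

lemma pcone_image: assumes "finite R" "x \<in> pcone (f ` R)"
  shows "\<exists>p. (\<forall>i\<in>R. 0 \<le> p i) \<and> x = (\<lambda>j. \<Sum>i\<in>R. p i * f i j)"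
proof -
  obtain c where c: "\<forall>v\<in>f ` R. 0 \<le> c v" "x = (\<lambda>j. \<Sum>v\<in>f ` R. c v * v j)"
    using assms(2) unfolding pcone_def by auto
  define N where "N v = card {i\<in>R. f i = v}" for v
  define p where "p i = c (f i) / N (f i)" for i
  have Npos: "N (f i) > 0" if "i \<in> R" for i
    unfolding N_def using assms(1) that by (auto simp: card_gt_0_iff)
  have "(\<Sum>i\<in>R. p i * f i j) = x j" for j
  proof -
    have "(\<Sum>i\<in>R. p i * f i j) = (\<Sum>v\<in>f ` R. \<Sum>i\<in>{i\<in>R. f i = v}. p i * f i j)"
      using assms(1) by (rule sum.image_gen)
    also have "\<dots> = (\<Sum>v\<in>f ` R. c v * v j)"
    proof (rule sum.cong[OF refl])
      fix v assume v: "v \<in> f ` R"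
      then obtain i0 where i0: "i0 \<in> R" "f i0 = v" by auto
      have "(\<Sum>i\<in>{i\<in>R. f i = v}. p i * f i j) = (\<Sum>i\<in>{i\<in>R. f i = v}. c v / N v * v j)"
        by (rule sum.cong) (auto simp: p_def)
      also have "\<dots> = N v * (c v / N v * v j)" by (simp add: N_def)
      also have "\<dots> = c v * v j" using Npos[OF i0(1)] i0 by simp
      finally show "(\<Sum>i\<in>{i\<in>R. f i = v}. p i * f i j) = c v * v j" .
    qed
    finally show ?thesis using c(2) by simp
  qed
  moreover have "\<forall>i\<in>R. 0 \<le> p i" using c(1) unfolding p_def by auto
  ultimately show ?thesis by (intro exI[of _ p]) auto
qed


lemma alt:
  fixes C :: "'c set" and V :: "('c \<Rightarrow> real) set"
  assumes "finite C" "finite V"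
  shows "(\<exists>q. (\<forall>j\<in>C. 0 \<le> q j) \<and> 0 < (\<Sum>j\<in>C. q j) \<and> (\<forall>v\<in>V. (\<Sum>j\<in>C. v j * q j) \<le> 0))
         \<or> (\<exists>x\<in>pcone V. \<forall>j\<in>C. 0 < x j)"
  using assms
proof (induction C arbitrary: V rule: finite_induct)
  case empty
  then show ?case using pcone_zero by auto
next
  case (insert k C V)
  define Vp where "Vp = {v\<in>V. 0 < v k}"
  define Vn where "Vn = {v\<in>V. v k < 0}"
  define V0 where "V0 = {v\<in>V. v k = 0}"
  show ?case
  proof (cases "Vp = {}")
    case True
    define q where "q = (\<lambda>j. if j = k then (1::real) else 0)"
    have s1: "(\<Sum>j\<in>insert k C. q j) = 1" using insert.hyps by (simp add: q_def)
    have s2: "(\<Sum>j\<in>insert k C. v j * q j) = v k" for v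
    proof -
      have "(\<Sum>j\<in>C. v j * q j) = 0" using insert.hyps by (auto simp: q_def intro!: sum.neutral)
      then show ?thesis using insert.hyps by (simp add: q_def)
    qed
    have "\<forall>v\<in>V. v k \<le> 0" using True unfolding Vp_def by force
    then show ?thesis using s1 s2 by (intro disjI1 exI[of _ q]) (auto simp: q_def)
  next
    case False
    define pr where "pr = (\<lambda>(u::'c \<Rightarrow> real, v::'c \<Rightarrow> real). \<lambda>j. v k * u j - u k * v j)"
    define W where "W = V0 \<union> Vp \<union> pr ` (Vn \<times> Vp)"
    have finW: "finite W" unfolding W_def V0_def Vp_def Vn_def using insert.prems by auto
    from insert.IH[OF finW] show ?thesis
    proof
      assume "\<exists>q. (\<forall>j\<in>C. 0 \<le> q j) \<and> 0 < sum q C \<and> (\<forall>v\<in>W. (\<Sum>j\<in>C. v j * q j) \<le> 0)"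
      then obtain q where q0: "\<forall>j\<in>C. 0 \<le> q j" and qpos: "0 < sum q C"
        and qW: "\<forall>v\<in>W. (\<Sum>j\<in>C. v j * q j) \<le> 0" by blast
      define S where "S v = (\<Sum>j\<in>C. v j * q j)" for v :: "'c \<Rightarrow> real"
      define L where "L = insert 0 ((\<lambda>u. S u / (- u k)) ` Vn)"
      have finL: "finite L" unfolding L_def Vn_def using insert.prems by auto
      define t where "t = Max L"
      have t0: "0 \<le> t" unfolding t_def using finL by (simp add: L_def)
      have tn: "S u / (- u k) \<le> t" if "u \<in> Vn" for u
        unfolding t_def using finL that by (intro Max_ge) (auto simp: L_def)
      have tL: "t \<in> L" unfolding t_def using finL by (intro Max_in) (auto simp: L_def)
      have SW: "S w \<le> 0" if "w \<in> W" for w using qW that by (simp add: S_def)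
      have tp: "v k * t + S v \<le> 0" if v: "v \<in> Vp" for v
      proof -
        from tL consider "t = 0" | u where "u \<in> Vn" "t = S u / (- u k)" unfolding L_def by auto
        then show ?thesis
        proof cases
          case 1 then show ?thesis using SW[of v] v by (simp add: W_def)
        next
          case 2
          have uk: "u k < 0" using 2(1) by (simp add: Vn_def)
          have "pr (u, v) \<in> W" using 2(1) v unfolding W_def by auto
          then have "S (pr (u,v)) \<le> 0" by (rule SW)
          moreover have "S (pr (u,v)) = v k * S u - u k * S v"
            unfolding S_def pr_def by (simp add: sum_subtractf sum_distrib_left algebra_simps)
          ultimately have le: "v k * S u - u k * S v \<le> 0" by simp
          have tu: "t * (- u k) = S u" using uk 2(2) by simp
          have "v k * t + S v = (v k * (t * (- u k)) - u k * S v) / (- u k)"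
            using uk by (simp add: field_simps)
          also have "\<dots> = (v k * S u - u k * S v) / (- u k)" by (simp only: tu)
          finally have "v k * t + S v = (v k * S u - u k * S v) / (- u k)" .
          also have "\<dots> \<le> 0" using le uk by (intro divide_nonpos_pos) auto
          finally show ?thesis .
        qed
      qed
      define q' where "q' = q(k := t)"
      have qC: "(\<Sum>j\<in>C. f j * q' j) = (\<Sum>j\<in>C. f j * q j)" for f
        using insert.hyps by (intro sum.cong) (auto simp: q'_def)
      have sumq': "(\<Sum>j\<in>insert k C. q' j) = t + sum q C"
        using qC[of "\<lambda>_. 1"] insert.hyps by (simp add: q'_def)
      have sv: "(\<Sum>j\<in>insert k C. v j * q' j) = v k * t + S v" for v
        using qC[of v] insert.hyps by (simp add: q'_def S_def)
      have "(\<Sum>j\<in>insert k C. v j * q' j) \<le> 0" if v: "v \<in> V" for v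
      proof (cases "v k = 0")
        case True
        then have "v \<in> W" using v by (simp add: W_def V0_def)
        then show ?thesis using SW[of v] True sv[of v] by simp
      next
        case False
        show ?thesis
        proof (cases "v k > 0")
          case True
          then show ?thesis using tp[of v] v sv[of v] by (simp add: Vp_def)
        next
          case False2: False
          then have vk: "v k < 0" using False by simp
          then have "v \<in> Vn" using v by (simp add: Vn_def)
          then have "S v / (- v k) \<le> t" by (rule tn)
          then have "S v \<le> t * (- v k)" using vk pos_divide_le_eq[of "- v k" "S v" t] by linarith
          then show ?thesis using sv[of v] by (simp add: algebra_simps)
        qed
      qed
      moreover have "\<forall>j\<in>insert k C. 0 \<le> q' j" using q0 t0 by (simp add: q'_def)
      moreover have "0 < (\<Sum>j\<in>insert k C. q' j)" using sumq' t0 qpos by simp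
      ultimately show ?thesis by (intro disjI1 exI[of _ q']) blast
    next
      assume "\<exists>x\<in>pcone W. \<forall>j\<in>C. 0 < x j"
      then obtain x where xW: "x \<in> pcone W" and xpos: "\<forall>j\<in>C. 0 < x j" by blast
      obtain c where c0: "\<forall>w\<in>W. 0 \<le> c w" and xdef: "x = (\<lambda>j. \<Sum>w\<in>W. c w * w j)"
        using xW unfolding pcone_def by auto
      have Wk: "0 \<le> w k" if "w \<in> W" for w
        using that unfolding W_def V0_def Vp_def pr_def by auto
      have xk: "0 \<le> x k" unfolding xdef using c0 Wk by (auto intro!: sum_nonneg)
      have WV: "\<forall>w\<in>W. w \<in> pcone V"
      proof
        fix w assume w: "w \<in> W"
        show "w \<in> pcone V"
        proof (cases "w \<in> V0 \<union> Vp")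
          case True
          then show ?thesis using insert.prems by (intro pcone_base) (auto simp: V0_def Vp_def)
        next
          case False
          then obtain u v where uv: "u \<in> Vn" "v \<in> Vp" "w = pr (u, v)" using w unfolding W_def by auto
          have eq: "w = (\<lambda>j. (\<lambda>j. v k * u j) j + (\<lambda>j. (- u k) * v j) j)"
            using uv(3) unfolding pr_def by auto
          have "(\<lambda>j. v k * u j) \<in> pcone V"
            using uv insert.prems by (intro pcone_scale pcone_base) (auto simp: Vn_def Vp_def)
          moreover have "(\<lambda>j. (- u k) * v j) \<in> pcone V"
            using uv insert.prems by (intro pcone_scale pcone_base) (auto simp: Vn_def Vp_def)
          ultimately show ?thesis unfolding eq by (rule pcone_add)
        qed
      qed
      have xV: "x \<in> pcone V" unfolding xdef using finW WV c0 by (rule pcone_sum)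
      obtain v0 where v0: "v0 \<in> Vp" using False by auto
      define \<mu> where "\<mu> = Min (insert 1 (x ` C))"
      have mu_pos: "0 < \<mu>" unfolding \<mu>_def using insert.hyps xpos by auto
      have mu_le: "\<mu> \<le> x j" if "j \<in> C" for j unfolding \<mu>_def using insert.hyps that by auto
      define B where "B = 1 + (\<Sum>j\<in>C. \<bar>v0 j\<bar>)"
      have B1: "1 \<le> B" unfolding B_def by (simp add: sum_nonneg)
      define e where "e = \<mu> / B"
      have e_pos: "0 < e" unfolding e_def using mu_pos B1 by simp
      define y where "y = (\<lambda>j. x j + e * v0 j)"
      have yV: "y \<in> pcone V" unfolding y_def
        by (rule pcone_add[OF xV pcone_scale[OF pcone_base]]) (use v0 insert.prems e_pos in \<open>auto simp: Vp_def\<close>)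
      have "0 < y j" if j: "j \<in> insert k C" for j
      proof (cases "j = k")
        case True
        have "0 < e * v0 k" using e_pos v0 by (simp add: Vp_def)
        then show ?thesis using xk True by (simp add: y_def)
      next
        case False
        then have jC: "j \<in> C" using j by simp
        have "\<bar>v0 j\<bar> \<le> (\<Sum>j\<in>C. \<bar>v0 j\<bar>)" using jC insert.hyps by (intro member_le_sum) auto
        then have "\<bar>v0 j\<bar> < B" unfolding B_def by simp
        then have "e * \<bar>v0 j\<bar> < e * B" using e_pos by simp
        also have "e * B = \<mu>" unfolding e_def using B1 by simp
        finally have "e * \<bar>v0 j\<bar> < x j" using mu_le[OF jC] by simp
        moreover have "- (e * \<bar>v0 j\<bar>) \<le> e * v0 j" using e_pos
          by (metis abs_ge_minus_self abs_mult abs_of_pos minus_le_iff)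
        ultimately show ?thesis unfolding y_def by simp
      qed
      then show ?thesis using yV by blast
    qed
  qed
qed


lemma mixed_point: "finite X \<Longrightarrow> x0 \<in> X \<Longrightarrow> (\<lambda>x. if x = x0 then 1 else 0) \<in> mixed X"
  unfolding mixed_def by auto

lemma minimax_approx:
  fixes a :: "'r \<Rightarrow> 'c \<Rightarrow> real"
  assumes finR: "finite R" and finC: "finite C" and R: "R \<noteq> {}" and C: "C \<noteq> {}" and e: "0 < \<epsilon>"
  shows "\<exists>c p q. p \<in> mixed R \<and> q \<in> mixed C \<and> (\<forall>j\<in>C. c - \<epsilon> \<le> (\<Sum>i\<in>R. p i * a i j))
            \<and> (\<forall>i\<in>R. (\<Sum>j\<in>C. q j * a i j) \<le> c + \<epsilon>)"
proof -
  define T where "T = {c. \<exists>q\<in>mixed C. \<forall>i\<in>R. (\<Sum>j\<in>C. q j * a i j) \<le> c}"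
  obtain i0 where i0: "i0 \<in> R" using R by auto
  obtain j0 where j0: "j0 \<in> C" using C by auto
  define lb where "lb = Min ((\<lambda>j. a i0 j) ` C)"
  have bdd: "bdd_below T"
  proof (rule bdd_belowI)
    fix c assume "c \<in> T"
    then obtain q where q: "q \<in> mixed C" "\<forall>i\<in>R. (\<Sum>j\<in>C. q j * a i j) \<le> c" unfolding T_def by auto
    have "lb = (\<Sum>j\<in>C. q j * lb)" using q(1) by (simp add: mixed_def sum_distrib_right[symmetric])
    also have "\<dots> \<le> (\<Sum>j\<in>C. q j * a i0 j)"
      using q(1) finC by (intro sum_mono mult_left_mono) (auto simp: mixed_def lb_def)
    also have "\<dots> \<le> c" using q(2) i0 by auto
    finally show "lb \<le> c" .
  qed
  define qj where "qj = (\<lambda>j. if j = j0 then (1::real) else 0)"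
  have qj: "qj \<in> mixed C" unfolding qj_def using finC j0 by (rule mixed_point)
  have "Max ((\<lambda>i. a i j0) ` R) \<in> T"
    unfolding T_def
  proof (intro CollectI bexI[OF _ qj] ballI)
    fix i assume i: "i \<in> R"
    have "(\<Sum>j\<in>C. qj j * a i j) = (\<Sum>j\<in>C. if j = j0 then a i j else 0)"
      by (rule sum.cong) (auto simp: qj_def)
    also have "\<dots> = a i j0" using finC j0 by simp
    also have "\<dots> \<le> Max ((\<lambda>i. a i j0) ` R)" using finR i by auto
    finally show "(\<Sum>j\<in>C. qj j * a i j) \<le> Max ((\<lambda>i. a i j0) ` R)" .
  qed
  then have Tne: "T \<noteq> {}" by auto
  define cs where "cs = Inf T"
  have "Inf T < cs + \<epsilon>" using e by (simp add: cs_def)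
  then obtain t where t: "t \<in> T" "t < cs + \<epsilon>" using cInf_lessD[OF Tne] by blast
  then obtain q where q: "q \<in> mixed C" "\<forall>i\<in>R. (\<Sum>j\<in>C. q j * a i j) \<le> t" unfolding T_def by auto
  have qok: "\<forall>i\<in>R. (\<Sum>j\<in>C. q j * a i j) \<le> cs + \<epsilon>" using q(2) t(2) by force
  define c' where "c' = cs - \<epsilon>"
  have c'T: "c' \<notin> T"
  proof
    assume "c' \<in> T"
    then have "cs \<le> c'" unfolding cs_def using bdd by (rule cInf_lower)
    then show False using e by (simp add: c'_def)
  qed
  define row where "row i = (\<lambda>j. a i j - c')" for i
  have "(\<exists>q. (\<forall>j\<in>C. 0 \<le> q j) \<and> 0 < (\<Sum>j\<in>C. q j) \<and> (\<forall>v\<in>row ` R. (\<Sum>j\<in>C. v j * q j) \<le> 0))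
         \<or> (\<exists>x\<in>pcone (row ` R). \<forall>j\<in>C. 0 < x j)"
    using finC finR by (intro alt) auto
  then obtain p where p: "p \<in> mixed R" "\<forall>j\<in>C. c' < (\<Sum>i\<in>R. p i * a i j)"
  proof
    assume "\<exists>q. (\<forall>j\<in>C. 0 \<le> q j) \<and> 0 < (\<Sum>j\<in>C. q j) \<and> (\<forall>v\<in>row ` R. (\<Sum>j\<in>C. v j * q j) \<le> 0)"
    then obtain r where r0: "\<forall>j\<in>C. 0 \<le> r j" and rpos: "0 < sum r C"
      and rR: "\<forall>i\<in>R. (\<Sum>j\<in>C. (a i j - c') * r j) \<le> 0" by (auto simp: row_def)
    define r' where "r' j = (if j \<in> C then r j / sum r C else 0)" for j
    have "r' \<in> mixed C" unfolding mixed_def r'_def using r0 rpos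
      by (auto simp: sum_divide_distrib[symmetric])
    moreover have "\<forall>i\<in>R. (\<Sum>j\<in>C. r' j * a i j) \<le> c'"
    proof
      fix i assume i: "i \<in> R"
      have "(\<Sum>j\<in>C. (a i j - c') * r j) = (\<Sum>j\<in>C. r j * a i j) - c' * sum r C"
        by (simp add: sum_subtractf sum_distrib_left algebra_simps)
      then have le: "(\<Sum>j\<in>C. r j * a i j) \<le> c' * sum r C" using rR i by auto
      have "(\<Sum>j\<in>C. r' j * a i j) = (\<Sum>j\<in>C. r j * a i j) / sum r C"
        unfolding r'_def by (simp add: sum_divide_distrib)
      also have "\<dots> \<le> c'" using le rpos by (simp add: pos_divide_le_eq)
      finally show "(\<Sum>j\<in>C. r' j * a i j) \<le> c'" .
    qed
    ultimately have "c' \<in> T" unfolding T_def by auto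
    then show ?thesis using c'T by simp
  next
    assume "\<exists>x\<in>pcone (row ` R). \<forall>j\<in>C. 0 < x j"
    then obtain x where x: "x \<in> pcone (row ` R)" "\<forall>j\<in>C. 0 < x j" by blast
    obtain p0 where p0: "\<forall>i\<in>R. 0 \<le> p0 i" "x = (\<lambda>j. \<Sum>i\<in>R. p0 i * row i j)"
      using pcone_image[OF finR x(1)] by blast
    define \<sigma> where "\<sigma> = sum p0 R"
    have sx: "(\<Sum>i\<in>R. p0 i * a i j) - c' * \<sigma> = x j" for j
      unfolding p0(2) row_def \<sigma>_def by (simp add: sum_subtractf sum_distrib_left algebra_simps)
    have \<sigma>0: "0 \<le> \<sigma>" unfolding \<sigma>_def using p0(1) by (simp add: sum_nonneg)
    have "\<sigma> \<noteq> 0"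
    proof
      assume "\<sigma> = 0"
      then have "\<forall>i\<in>R. p0 i = 0" using p0(1) finR unfolding \<sigma>_def by (simp add: sum_nonneg_eq_0_iff)
      then have "x j0 = 0" unfolding p0(2) by simp
      then show False using x(2) j0 by auto
    qed
    then have \<sigma>pos: "0 < \<sigma>" using \<sigma>0 by simp
    define p where "p i = (if i \<in> R then p0 i / \<sigma> else 0)" for i
    have "p \<in> mixed R" unfolding mixed_def p_def using p0(1) \<sigma>pos
      by (auto simp: sum_divide_distrib[symmetric] \<sigma>_def)
    moreover have "\<forall>j\<in>C. c' < (\<Sum>i\<in>R. p i * a i j)"
    proof
      fix j assume j: "j \<in> C"
      have lt: "c' * \<sigma> < (\<Sum>i\<in>R. p0 i * a i j)" using sx[of j] x(2) j by auto
      have "(\<Sum>i\<in>R. p i * a i j) = (\<Sum>i\<in>R. p0 i * a i j) / \<sigma>"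
        unfolding p_def by (simp add: sum_divide_distrib)
      moreover have "c' < (\<Sum>i\<in>R. p0 i * a i j) / \<sigma>" using lt \<sigma>pos by (simp add: pos_less_divide_eq)
      ultimately show "c' < (\<Sum>i\<in>R. p i * a i j)" by simp
    qed
    ultimately show ?thesis by (rule that)
  qed
  show ?thesis
    using p q(1) qok by (intro exI[of _ cs] exI[of _ p] exI[of _ q]) (force simp: c'_def)
qed


lemma mixed_sum1: "p \<in> mixed X \<Longrightarrow> sum p X = 1" by (simp add: mixed_def)
lemma mixed_nonneg: "p \<in> mixed X \<Longrightarrow> 0 \<le> p x" by (simp add: mixed_def)

lemma exp_rows: "exp_payoff M i X1 X2 p q = (\<Sum>a\<in>X1. p a * (\<Sum>b\<in>X2. q b * M i a b))"
  unfolding exp_payoff_def by (simp add: sum_distrib_left mult.assoc)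

lemma exp_cols: "exp_payoff M i X1 X2 p q = (\<Sum>b\<in>X2. q b * (\<Sum>a\<in>X1. p a * M i a b))"
  unfolding exp_payoff_def by (subst sum.swap) (simp add: sum_distrib_left algebra_simps)

lemma wsum_le1:
  assumes "finite X" "p \<in> mixed X" "\<forall>x\<in>X. f x \<le> 1"
  shows "(\<Sum>x\<in>X. p x * f x) \<le> 1"
proof -
  have "(\<Sum>x\<in>X. p x * f x) \<le> (\<Sum>x\<in>X. p x * 1)"
    using assms by (intro sum_mono mult_left_mono) (auto simp: mixed_def)
  then show ?thesis using mixed_sum1[OF assms(2)] by simp
qed

lemma wsum_ge:
  assumes "finite X" "p \<in> mixed X" "\<forall>x\<in>X. L \<le> f x"
  shows "L \<le> (\<Sum>x\<in>X. p x * f x)"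
proof -
  have "(\<Sum>x\<in>X. p x * L) \<le> (\<Sum>x\<in>X. p x * f x)"
    using assms by (intro sum_mono mult_left_mono) (auto simp: mixed_def)
  then show ?thesis using mixed_sum1[OF assms(2)] by (simp add: sum_distrib_right[symmetric])
qed

lemma wsum_le:
  assumes "finite X" "p \<in> mixed X" "\<forall>x\<in>X. f x \<le> U"
  shows "(\<Sum>x\<in>X. p x * f x) \<le> U"
proof -
  have "(\<Sum>x\<in>X. p x * f x) \<le> (\<Sum>x\<in>X. p x * U)"
    using assms by (intro sum_mono mult_left_mono) (auto simp: mixed_def)
  then show ?thesis using mixed_sum1[OF assms(2)] by (simp add: sum_distrib_right[symmetric])
qed

lemma wsum_nonneg:
  assumes "p \<in> mixed X" "\<forall>x\<in>X. 0 \<le> f x"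
  shows "0 \<le> (\<Sum>x\<in>X. p x * f x)"
  using assms by (intro sum_nonneg) (auto simp: mixed_def)

lemma exp_bounds:
  assumes "finite X1" "finite X2" "p \<in> mixed X1" "q \<in> mixed X2"
    "\<forall>a\<in>X1. \<forall>b\<in>X2. 0 \<le> M i a b \<and> M i a b \<le> 1"
  shows "0 \<le> exp_payoff M i X1 X2 p q \<and> exp_payoff M i X1 X2 p q \<le> 1"
proof -
  have r: "0 \<le> (\<Sum>b\<in>X2. q b * M i a b) \<and> (\<Sum>b\<in>X2. q b * M i a b) \<le> 1" if "a \<in> X1" for a
    using assms that by (auto intro!: wsum_nonneg wsum_le1)
  have "0 \<le> (\<Sum>a\<in>X1. p a * (\<Sum>b\<in>X2. q b * M i a b))"
    by (rule wsum_nonneg[OF assms(3)]) (use r in auto)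
  moreover have "(\<Sum>a\<in>X1. p a * (\<Sum>b\<in>X2. q b * M i a b)) \<le> 1"
    by (rule wsum_le1[OF assms(1,3)]) (use r in auto)
  ultimately show ?thesis unfolding exp_rows by simp
qed

lemma sup_inf_ge:
  fixes f :: "'x \<Rightarrow> 'y \<Rightarrow> real"
  assumes x0: "x0 \<in> S" and T: "T \<noteq> {}" and b: "\<forall>x\<in>S. \<forall>y\<in>T. 0 \<le> f x y \<and> f x y \<le> 1"
    and L: "\<forall>y\<in>T. L \<le> f x0 y"
  shows "L \<le> (SUP x\<in>S. INF y\<in>T. f x y)"
proof -
  have "L \<le> (INF y\<in>T. f x0 y)" using T L by (intro cINF_greatest) auto
  also have "\<dots> \<le> (SUP x\<in>S. INF y\<in>T. f x y)"
  proof (rule cSUP_upper[OF x0])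
    obtain y0 where y0: "y0 \<in> T" using T by auto
    show "bdd_above ((\<lambda>x. INF y\<in>T. f x y) ` S)"
    proof (rule bdd_aboveI2)
      fix x assume x: "x \<in> S"
      have "(INF y\<in>T. f x y) \<le> f x y0"
        using y0 x b by (intro cINF_lower bdd_belowI2[where m=0]) auto
      also have "\<dots> \<le> 1" using b x y0 by auto
      finally show "(INF y\<in>T. f x y) \<le> 1" .
    qed
  qed
  finally show ?thesis .
qed

lemma None_ext: "None \<in> ext_actions C" by (simp add: ext_actions_def)
lemma finite_ext: "finite C \<Longrightarrow> finite (ext_actions C)" by (simp add: ext_actions_def)

lemma gv1_ge:
  assumes "finite X1" "finite X2" "None \<in> X2" "\<forall>a\<in>X1. \<forall>b\<in>X2. 0 \<le> M 1 a b \<and> M 1 a b \<le> 1"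
    "p \<in> mixed X1" "\<forall>q\<in>mixed X2. L \<le> exp_payoff M 1 X1 X2 p q"
  shows "L \<le> game_value M 1 X1 X2"
  unfolding game_value_def using assms mixed_point[OF assms(2,3)]
  by (simp, intro sup_inf_ge) (auto intro: exp_bounds[THEN conjunct1] exp_bounds[THEN conjunct2])

lemma gv2_ge:
  assumes "finite X1" "finite X2" "None \<in> X1" "\<forall>a\<in>X1. \<forall>b\<in>X2. 0 \<le> M 2 a b \<and> M 2 a b \<le> 1"
    "q \<in> mixed X2" "\<forall>p\<in>mixed X1. L \<le> exp_payoff M 2 X1 X2 p q"
  shows "L \<le> game_value M 2 X1 X2"
  unfolding game_value_def using assms mixed_point[OF assms(1,3)]
  by (simp, intro sup_inf_ge) (auto intro: exp_bounds[THEN conjunct1] exp_bounds[THEN conjunct2])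

definition rst :: "('b option \<Rightarrow> real) \<Rightarrow> 'b option set \<Rightarrow> 'b option set \<Rightarrow> 'b option \<Rightarrow> real" where
  "rst p X R = (\<lambda>x. if x = None then p None + (\<Sum>y\<in>X - R. p y) else if x \<in> R then p x else 0)"

lemma rst_mixed:
  assumes "finite X" "R \<subseteq> X" "None \<in> R" "p \<in> mixed X"
  shows "rst p X R \<in> mixed R"
proof -
  have fR: "finite R" using assms finite_subset by auto
  have nn: "0 \<le> (\<Sum>y\<in>X - R. p y)" using assms(4) by (simp add: mixed_def sum_nonneg)
  have "sum (rst p X R) R = rst p X R None + sum (rst p X R) (R - {None})"
    using fR assms(3) by (simp add: sum.remove)
  also have "sum (rst p X R) (R - {None}) = sum p (R - {None})"
    by (rule sum.cong) (auto simp: rst_def)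
  also have "rst p X R None = p None + (\<Sum>y\<in>X - R. p y)" by (simp add: rst_def)
  also have "p None + (\<Sum>y\<in>X - R. p y) + sum p (R - {None}) = (\<Sum>y\<in>X - R. p y) + sum p R"
    using fR assms(3) by (simp add: sum.remove)
  also have "\<dots> = sum p X" using assms(1,2) by (simp add: sum.subset_diff[symmetric])
  also have "\<dots> = 1" using assms(4) by (simp add: mixed_def)
  finally show ?thesis unfolding mixed_def using nn assms(3,4) by (auto simp: rst_def mixed_def)
qed

lemma rst_ge:
  assumes "finite X" "R \<subseteq> X" "None \<in> R" "p \<in> mixed X" "\<forall>x\<in>X. 0 \<le> f x \<and> f x \<le> 1"
  shows "(\<Sum>x\<in>X. p x * f x) - (\<Sum>y\<in>X - R. p y) \<le> (\<Sum>x\<in>R. rst p X R x * f x)"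
proof -
  have fR: "finite R" using assms finite_subset by auto
  have nn: "0 \<le> (\<Sum>y\<in>X - R. p y)" using assms(4) by (simp add: mixed_def sum_nonneg)
  have "(\<Sum>x\<in>X. p x * f x) = (\<Sum>x\<in>X - R. p x * f x) + (\<Sum>x\<in>R. p x * f x)"
    using assms(1,2) by (simp add: sum.subset_diff)
  also have "(\<Sum>x\<in>X - R. p x * f x) \<le> (\<Sum>y\<in>X - R. p y * 1)"
    using assms by (intro sum_mono mult_left_mono) (auto simp: mixed_def)
  also have "(\<Sum>x\<in>R. p x * f x) \<le> (\<Sum>x\<in>R. rst p X R x * f x)"
    using assms nn by (intro sum_mono mult_right_mono) (auto simp: rst_def)
  finally show ?thesis by simp
qed


lemma count_mod:
  fixes x m n :: nat
  assumes "x < m" "n \<le> m"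
  shows "card {y\<in>{0..<m}. (x + y) mod m < n} = n"
proof -
  define g where "g y = (x + y) mod m" for y
  have surj: "\<exists>y<m. g y = t" if t: "t < m" for t
  proof -
      define y where "y = (t + m - x) mod m"
      have "g y = (x + (t + m - x)) mod m" unfolding g_def y_def by (simp add: mod_add_right_eq)
      also have "x + (t + m - x) = t + m" using assms by simp
      also have "(t + m) mod m = t" using t by simp
      finally have gy: "g y = t" .
      have "y < m" unfolding y_def using assms by simp
      then show ?thesis using gy by blast
  qed
  have imgm: "g ` {0..<m} = {0..<m}"
  proof
    show "g ` {0..<m} \<subseteq> {0..<m}" unfolding g_def using assms by auto
    show "{0..<m} \<subseteq> g ` {0..<m}" using surj by force
  qed
  have inj: "inj_on g {0..<m}"
    by (rule eq_card_imp_inj_on) (simp_all add: imgm)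
  have img: "g ` {y\<in>{0..<m}. g y < n} = {0..<n}"
  proof
    show "g ` {y\<in>{0..<m}. g y < n} \<subseteq> {0..<n}" by auto
    show "{0..<n} \<subseteq> g ` {y\<in>{0..<m}. g y < n}"
    proof
      fix t assume t: "t \<in> {0..<n}"
      then obtain y where "y < m" "g y = t" using surj[of t] assms by auto
      then show "t \<in> g ` {y\<in>{0..<m}. g y < n}" using t by force
    qed
  qed
  have "card {y\<in>{0..<m}. g y < n} = card (g ` {y\<in>{0..<m}. g y < n})"
    by (rule card_image[symmetric]) (rule inj_on_subset[OF inj], auto)
  then show ?thesis using img by (simp add: g_def)
qed


lemma loss_sum:
  fixes m n :: nat and p :: "nat option \<Rightarrow> real"
  assumes nm: "n \<le> m" and p: "p \<in> mixed (ext_actions {0..<m})"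
  shows "(\<Sum>s\<in>{0..<m}. \<Sum>y\<in>ext_actions {0..<m} - ext_actions {a\<in>{0..<m}. (a + s) mod m < n}. p y)
           \<le> real m - real n"
proof -
  define A where "A = {0..<m::nat}"
  define Cl where "Cl s = {a\<in>A. (a + s) mod m < n}" for s
  have diff: "ext_actions A - ext_actions (Cl s) = Some ` {a\<in>A. a \<notin> Cl s}" for s
    unfolding ext_actions_def Cl_def by auto
  have "(\<Sum>s\<in>A. \<Sum>y\<in>ext_actions A - ext_actions (Cl s). p y)
        = (\<Sum>s\<in>A. \<Sum>a\<in>A. if a \<notin> Cl s then p (Some a) else 0)"
  proof (rule sum.cong[OF refl])
    fix s
    have "(\<Sum>y\<in>ext_actions A - ext_actions (Cl s). p y) = (\<Sum>a\<in>{a\<in>A. a \<notin> Cl s}. p (Some a))"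
      unfolding diff by (subst sum.reindex) auto
    also have "\<dots> = (\<Sum>a\<in>A. if a \<notin> Cl s then p (Some a) else 0)"
      by (rule sum.inter_filter) (simp add: A_def)
    finally show "(\<Sum>y\<in>ext_actions A - ext_actions (Cl s). p y) = (\<Sum>a\<in>A. if a \<notin> Cl s then p (Some a) else 0)" .
  qed
  also have "\<dots> = (\<Sum>a\<in>A. \<Sum>s\<in>A. if a \<notin> Cl s then p (Some a) else 0)" by (rule sum.swap)
  also have "\<dots> = (\<Sum>a\<in>A. p (Some a) * (real m - real n))"
  proof (rule sum.cong[OF refl])
    fix a assume a: "a \<in> A"
    have "(\<Sum>s\<in>A. if a \<notin> Cl s then p (Some a) else 0) = (\<Sum>s\<in>{s\<in>A. a \<notin> Cl s}. p (Some a))"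
      by (rule sum.inter_filter[symmetric]) (simp add: A_def)
    also have "\<dots> = real (card {s\<in>A. a \<notin> Cl s}) * p (Some a)" by simp
    also have "{s\<in>A. a \<notin> Cl s} = A - {s\<in>{0..<m}. (a + s) mod m < n}"
      using a unfolding Cl_def A_def by auto
    also have "card (A - {s\<in>{0..<m}. (a + s) mod m < n}) = m - n"
      using a nm count_mod[of a m n] unfolding A_def by (subst card_Diff_subset) auto
    finally show "(\<Sum>s\<in>A. if a \<notin> Cl s then p (Some a) else 0) = p (Some a) * (real m - real n)"
      using nm by (simp add: of_nat_diff)
  qed
  also have "\<dots> = (\<Sum>a\<in>A. p (Some a)) * (real m - real n)" by (simp add: sum_distrib_right)
  also have "\<dots> \<le> 1 * (real m - real n)"
  proof (rule mult_right_mono)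
    have "(\<Sum>a\<in>A. p (Some a)) = sum p (Some ` A)" by (subst sum.reindex) auto
    also have "\<dots> \<le> sum p (ext_actions A)"
      using p by (intro sum_mono2) (auto simp: ext_actions_def A_def mixed_def)
    also have "\<dots> = 1" using p by (simp add: mixed_def A_def)
    finally show "(\<Sum>a\<in>A. p (Some a)) \<le> 1" .
  qed (use nm in simp)
  finally show ?thesis unfolding A_def Cl_def by simp
qed


theorem theoremE1:
  fixes m n :: nat
  assumes "0 < n" and "n \<le> m"
  shows "\<exists>(A::nat set) (S::nat set) (P::nat \<Rightarrow> real) Cw Cl.
           is_ckddg A S P Cw Cl \<and>
           (\<forall>s\<in>S. card (Cw s) \<ge> m \<and> card (Cl s) \<le> n) \<and>
           (\<forall>M. is_policy A M \<longrightarrow>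
                ckddg_error S P Cw Cl M \<ge> (2 * real n - real m) / (2 * real m))"
proof -
  have m0: "0 < m" using assms by simp
  define A where "A = {0..<m}"
  define Cl where "Cl = (\<lambda>s. {a\<in>{0..<m}. (a + s) mod m < n})"
  define P where "P = (\<lambda>s::nat. 1 / real m)"
  have ck: "is_ckddg A A P (\<lambda>s. A) Cl"
    unfolding is_ckddg_def A_def P_def Cl_def using m0 by auto
  have cards: "\<forall>s\<in>A. card ((\<lambda>s. A) s) \<ge> m \<and> card (Cl s) \<le> n"
  proof
    fix s assume s: "s \<in> A"
    have "{a\<in>{0..<m}. (a + s) mod m < n} = {a\<in>{0..<m}. (s + a) mod m < n}" by (simp add: add.commute)
    then have "card (Cl s) = n" using count_mod[of s m n] s assms unfolding Cl_def A_def by simp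
    then show "card ((\<lambda>s. A) s) \<ge> m \<and> card (Cl s) \<le> n" by (simp add: A_def)
  qed
  have err: "ckddg_error A P (\<lambda>s. A) Cl M \<ge> (2 * real n - real m) / (2 * real m)"
    if pol: "is_policy A M" for M
  proof -
    define X where "X = ext_actions A"
    have finX: "finite X" unfolding X_def A_def by (simp add: finite_ext)
    have NX: "None \<in> X" unfolding X_def by (rule None_ext)
    have Xne: "X \<noteq> {}" using NX by auto
    have b1: "0 \<le> M 1 a b \<and> M 1 a b \<le> 1" if "a \<in> X" "b \<in> X" for a b
      using pol that unfolding is_policy_def X_def by auto
    have b2: "0 \<le> M 2 a b \<and> M 2 a b \<le> 1" if "a \<in> X" "b \<in> X" for a b
      using pol that unfolding is_policy_def X_def by auto
    have s12: "M 2 a b = 1 - M 1 a b" if "a \<in> X" "b \<in> X" for a b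
      using pol that unfolding is_policy_def X_def by force
    define R where "R s = ext_actions (Cl s)" for s
    have RX: "R s \<subseteq> X" for s unfolding R_def X_def ext_actions_def Cl_def A_def by auto
    have NR: "None \<in> R s" for s unfolding R_def by (rule None_ext)
    have finR: "finite (R s)" for s using RX finX finite_subset by blast
    show ?thesis
    proof (rule field_le_epsilon)
      fix \<epsilon> :: real assume e: "0 < \<epsilon>"
      obtain c p0 q0 where p0: "p0 \<in> mixed X" and q0: "q0 \<in> mixed X"
        and pc: "\<forall>j\<in>X. c - \<epsilon> \<le> (\<Sum>i\<in>X. p0 i * M 1 i j)"
        and qc: "\<forall>i\<in>X. (\<Sum>j\<in>X. q0 j * M 1 i j) \<le> c + \<epsilon>"
        using minimax_approx[OF finX finX Xne Xne e, of "M 1"] by blast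
      define Lp where "Lp s = (\<Sum>y\<in>X - R s. p0 y)" for s
      define Lq where "Lq s = (\<Sum>y\<in>X - R s. q0 y)" for s
      have w12: "c - \<epsilon> - Lp s \<le> wval (\<lambda>s. A) Cl M 1 2 s" for s
      proof -
        have "wval (\<lambda>s. A) Cl M 1 2 s = game_value M 1 (R s) X" by (simp add: wval_def R_def X_def)
        moreover have "c - \<epsilon> - Lp s \<le> game_value M 1 (R s) X"
        proof (rule gv1_ge[OF finR finX NX _ rst_mixed[OF finX RX NR p0]])
          show "\<forall>a\<in>R s. \<forall>b\<in>X. 0 \<le> M 1 a b \<and> M 1 a b \<le> 1" using b1 RX by blast
          show "\<forall>q\<in>mixed X. c - \<epsilon> - Lp s \<le> exp_payoff M 1 (R s) X (rst p0 X (R s)) q"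
          proof
            fix q assume q: "q \<in> mixed X"
            define f where "f a = (\<Sum>b\<in>X. q b * M 1 a b)" for a
            have fb: "\<forall>a\<in>X. 0 \<le> f a \<and> f a \<le> 1" unfolding f_def
              using b1 q finX by (auto intro!: wsum_nonneg wsum_le1)
            have "c - \<epsilon> \<le> (\<Sum>b\<in>X. q b * (\<Sum>a\<in>X. p0 a * M 1 a b))"
              by (rule wsum_ge[OF finX q]) (use pc in auto)
            also have "\<dots> = (\<Sum>a\<in>X. p0 a * f a)"
              unfolding f_def using exp_cols[of M 1 X X p0 q] exp_rows[of M 1 X X p0 q] by simp
            finally have "c - \<epsilon> - Lp s \<le> (\<Sum>a\<in>X. p0 a * f a) - Lp s" by simp
            also have "\<dots> \<le> (\<Sum>a\<in>R s. rst p0 X (R s) a * f a)"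
              unfolding Lp_def by (rule rst_ge[OF finX RX NR p0 fb])
            also have "\<dots> = exp_payoff M 1 (R s) X (rst p0 X (R s)) q"
              unfolding exp_rows f_def by simp
            finally show "c - \<epsilon> - Lp s \<le> exp_payoff M 1 (R s) X (rst p0 X (R s)) q" .
          qed
        qed
        ultimately show ?thesis by simp
      qed
      have w21: "1 - c - \<epsilon> - Lq s \<le> wval (\<lambda>s. A) Cl M 2 1 s" for s
      proof -
        have "wval (\<lambda>s. A) Cl M 2 1 s = game_value M 2 X (R s)" by (simp add: wval_def R_def X_def)
        moreover have "1 - c - \<epsilon> - Lq s \<le> game_value M 2 X (R s)"
        proof (rule gv2_ge[OF finX finR NX _ rst_mixed[OF finX RX NR q0]])
          show "\<forall>a\<in>X. \<forall>b\<in>R s. 0 \<le> M 2 a b \<and> M 2 a b \<le> 1" using b2 RX by blast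
          show "\<forall>p\<in>mixed X. 1 - c - \<epsilon> - Lq s \<le> exp_payoff M 2 X (R s) p (rst q0 X (R s))"
          proof
            fix p assume p: "p \<in> mixed X"
            define g where "g b = (\<Sum>a\<in>X. p a * M 2 a b)" for b
            have gb: "\<forall>b\<in>X. 0 \<le> g b \<and> g b \<le> 1" unfolding g_def
              using b2 p finX by (auto intro!: wsum_nonneg wsum_le1)
            have inner: "1 - c - \<epsilon> \<le> (\<Sum>b\<in>X. q0 b * M 2 a b)" if a: "a \<in> X" for a
            proof -
              have "(\<Sum>b\<in>X. q0 b * M 2 a b) = (\<Sum>b\<in>X. q0 b - q0 b * M 1 a b)"
              proof (rule sum.cong[OF refl])
                fix b assume "b \<in> X"
                then have "M 2 a b = 1 - M 1 a b" using s12 a by blast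
                then show "q0 b * M 2 a b = q0 b - q0 b * M 1 a b" by (simp add: right_diff_distrib)
              qed
              also have "\<dots> = 1 - (\<Sum>b\<in>X. q0 b * M 1 a b)"
                using q0 by (simp add: sum_subtractf mixed_def)
              finally show ?thesis using qc[rule_format, OF a] by linarith
            qed
            have "1 - c - \<epsilon> \<le> (\<Sum>a\<in>X. p a * (\<Sum>b\<in>X. q0 b * M 2 a b))"
              by (rule wsum_ge[OF finX p]) (use inner in auto)
            also have "\<dots> = (\<Sum>b\<in>X. q0 b * g b)"
              unfolding g_def using exp_cols[of M 2 X X p q0] exp_rows[of M 2 X X p q0] by simp
            finally have "1 - c - \<epsilon> - Lq s \<le> (\<Sum>b\<in>X. q0 b * g b) - Lq s" by simp
            also have "\<dots> \<le> (\<Sum>b\<in>R s. rst q0 X (R s) b * g b)"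
              unfolding Lq_def by (rule rst_ge[OF finX RX NR q0 gb])
            also have "\<dots> = exp_payoff M 2 X (R s) p (rst q0 X (R s))"
              unfolding exp_cols g_def by simp
            finally show "1 - c - \<epsilon> - Lq s \<le> exp_payoff M 2 X (R s) p (rst q0 X (R s))" .
          qed
        qed
        ultimately show ?thesis by simp
      qed
      have sLp: "(\<Sum>s\<in>A. Lp s) \<le> real m - real n"
        using loss_sum[OF assms(2), of p0] p0 unfolding Lp_def R_def X_def A_def Cl_def by simp
      have sLq: "(\<Sum>s\<in>A. Lq s) \<le> real m - real n"
        using loss_sum[OF assms(2), of q0] q0 unfolding Lq_def R_def X_def A_def Cl_def by simp
      have "ckddg_error A P (\<lambda>s. A) Cl M
            \<ge> (\<Sum>s\<in>A. (1 / real m) * ((1 - 2 * \<epsilon> - Lp s - Lq s) / 2))"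
        unfolding ckddg_error_def P_def
      proof (rule sum_mono)
        fix s assume "s \<in> A"
        have "(1 - 2 * \<epsilon> - Lp s - Lq s) / 2 \<le> (wval (\<lambda>s. A) Cl M 1 2 s + wval (\<lambda>s. A) Cl M 2 1 s) / 2"
          using w12[of s] w21[of s] by simp
        then show "1 / real m * ((1 - 2 * \<epsilon> - Lp s - Lq s) / 2)
            \<le> 1 / real m * ((wval (\<lambda>s. A) Cl M 1 2 s + wval (\<lambda>s. A) Cl M 2 1 s) / 2)"
          using m0 by (intro mult_left_mono) auto
      qed
      also have "(\<Sum>s\<in>A. (1 / real m) * ((1 - 2 * \<epsilon> - Lp s - Lq s) / 2))
          = (real m * (1 - 2 * \<epsilon>) - (\<Sum>s\<in>A. Lp s) - (\<Sum>s\<in>A. Lq s)) / (2 * real m)"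
        by (simp add: sum_distrib_left[symmetric] sum_divide_distrib[symmetric] sum_subtractf A_def)
      finally have E: "(real m * (1 - 2 * \<epsilon>) - (\<Sum>s\<in>A. Lp s) - (\<Sum>s\<in>A. Lq s)) / (2 * real m)
          \<le> ckddg_error A P (\<lambda>s. A) Cl M" .
      have "(2 * real n - real m) / (2 * real m) - \<epsilon>
          = (real m * (1 - 2 * \<epsilon>) - (real m - real n) - (real m - real n)) / (2 * real m)"
        using m0 by (simp add: field_simps)
      also have "\<dots> \<le> (real m * (1 - 2 * \<epsilon>) - (\<Sum>s\<in>A. Lp s) - (\<Sum>s\<in>A. Lq s)) / (2 * real m)"
        using sLp sLq m0 by (intro divide_right_mono) auto
      finally show "(2 * real n - real m) / (2 * real m) \<le> ckddg_error A P (\<lambda>s. A) Cl M + \<epsilon>"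
        using E by simp
    qed
  qed
  show ?thesis
    using ck cards err by blast
qed

end
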